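(* Let $\mathcal X$ be a measurable space equipped with a data distribution $p_{\text{data}}$, let $d,n\ge 1$ be integers, and let $\phi_1,\ldots,\phi_n:\mathcal X\to[0,1]^d$ and $q=(q_1,\ldots,q_n):\mathcal X\to[0,1]^n$ be measurable maps with $\sum_{i=1}^n q_i(x)=1$ for every $x\in\mathcal X$. Let $\mathcal Z=[0,1]^d\times\{1,\ldots,n\}$ and let $p$ be the distribution on $\mathcal Z$ given by $$p(z,j)=\mathbb E_{x\sim p_{\text{data}}}\, q_j(x)\,\mathbb 1_{\phi_j(x)}(z),$$ i.e. for any bounded measurable $f:\mathcal Z\to\mathbb R$, $\mathbb E_{(z,i)\sim p} f(z,i)=\mathbb E_{x\sim p_{\text{data}}}\sum_{i=1}^n q_i(x) f(\phi_i(x),i)$. Let $\mathcal U_{\mathcal Z}$ be the uniform distribution on $\mathcal Z$ (uniform on $[0,1]^d$ times uniform on $\{1,\dots,n\}$). Let $k_0(x,y)=\frac{d/6}{d/6+|\sigma^{-1}(x)-\sigma^{-1}(y)|^2}$ (with $\sigma^{-1}$ the coordinatewise logit, the inverse of the sigmoid), and let $k_{\mathcal Z}((z_1,i),(z_2,j))=\delta_{ij}k_0(z_1,z_2)$. For $N\ge 2$, let $x_1,\ldots,x_N$ be a random sample drawn from $p_{\text{data}}$ and $w_1,\ldots,w_N$ a random sample drawn uniformly from $[0,1]^d$, all independent. Then the quantity $$\ell_{\mathcal Z}(q,\phi_1,\ldots,\phi_n)=\frac{1}{N(N-1)}\sum_{\substack{j,k=1\\ j\ne k}}^N\sum_{i=1}^n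 q_i(x_j)q_i(x_k)k_0(\phi_i(x_j),\phi_i(x_k)) - \frac{2}{nN^2}\sum_{j,k=1}^N\sum_{i=1}^n q_i(x_j)k_0(\phi_i(x_j),w_k) + \frac{1}{nN(N-1)}\sum_{\substack{j,k=1\\ j\ne k}}^N k_0(w_j,w_k)$$ is an estimator of $\operatorname{MMD}_{k_{\mathcal Z}}(p,\mathcal U_{\mathcal Z})^2$, in the sense that its expectation over the samples equals $\operatorname{MMD}_{k_{\mathcal Z}}(p,\mathcal U_{\mathcal Z})^2$.
   Context: For distributions $P,Q$ on a common space and a kernel $k$, the maximal mean discrepancy is defined by $\operatorname{MMD}_k(P,Q)^2=\mathbb E_{y_1,y_2\sim P\times P}k(y_1,y_2)-2\,\mathbb E_{y_1,y_2\sim P\times Q}k(y_1,y_2)+\mathbb E_{y_1,y_2\sim Q\times Q}k(y_1,y_2)$, where $y_1,y_2$ are independent. $\mathbb 1_y$ denotes the point mass at $y$, and $\delta_{ij}$ is the Kronecker delta. Points of $[0,1]^d$ on the boundary, where the logit is infinite, are understood to have measure zero or $k_0$ extended by continuity; $k_0$ takes values in $[0,1]$. *)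

theory Defs
  imports "HOL-Probability.Probability"
begin

text \<open>Logit (inverse sigmoid) on (0,1); at the boundary Isabelle's conventions
  (ln 0 = 0, x/0 = 0) give some finite value, so k0 remains a measurable kernel
  with values in [0,1] (boundary convention of the paper).\<close>
definition logit :: "real \<Rightarrow> real" where
  "logit t = ln (t / (1 - t))"

definition k0 :: "real^'d \<Rightarrow> real^'d \<Rightarrow> real" where
  "k0 x y = (real CARD('d) / 6) /
      (real CARD('d) / 6 + (\<Sum>c\<in>UNIV. (logit (x$c) - logit (y$c))^2))"

definition kZ :: "((real^'d) \<times> nat) \<Rightarrow> ((real^'d) \<times> nat) \<Rightarrow> real" where
  "kZ u v = (if snd u = snd v then k0 (fst u) (fst v) else 0)"

definition MMD2 :: "('z \<Rightarrow> 'z \<Rightarrow> real) \<Rightarrow> 'z measure \<Rightarrow> 'z measure \<Rightarrow> real" where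
  "MMD2 k P Q =
     (\<integral>y. k (fst y) (snd y) \<partial>(P \<Otimes>\<^sub>M P))
     - 2 * (\<integral>y. k (fst y) (snd y) \<partial>(P \<Otimes>\<^sub>M Q))
     + (\<integral>y. k (fst y) (snd y) \<partial>(Q \<Otimes>\<^sub>M Q))"

definition unit_cube :: "(real^'d) set" where
  "unit_cube = {z. \<forall>c. 0 \<le> z$c \<and> z$c \<le> 1}"

definition unif_cube :: "(real^'d) measure" where
  "unif_cube = uniform_measure lborel unit_cube"

definition unif_Z :: "nat \<Rightarrow> ((real^'d) \<times> nat) measure" where
  "unif_Z n = unif_cube \<Otimes>\<^sub>M uniform_measure (count_space UNIV) {1..n}"

definition p_Z :: "'a measure \<Rightarrow> nat \<Rightarrow> (nat \<Rightarrow> 'a \<Rightarrow> real) \<Rightarrow> (nat \<Rightarrow> 'a \<Rightarrow> real^'d)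
    \<Rightarrow> ((real^'d) \<times> nat) measure" where
  "p_Z M n q \<phi> = measure_of UNIV (sets (borel \<Otimes>\<^sub>M count_space UNIV))
     (\<lambda>A. \<integral>\<^sup>+x. (\<Sum>i\<in>{1..n}. ennreal (q i x) * indicator A (\<phi> i x, i)) \<partial>M)"

definition ell_Z :: "nat \<Rightarrow> nat \<Rightarrow> (nat \<Rightarrow> 'a \<Rightarrow> real) \<Rightarrow> (nat \<Rightarrow> 'a \<Rightarrow> real^'d)
    \<Rightarrow> (nat \<Rightarrow> 'a) \<Rightarrow> (nat \<Rightarrow> real^'d) \<Rightarrow> real" where
  "ell_Z n N q \<phi> xs ws =
     1 / (real N * (real N - 1)) *
       (\<Sum>j\<in>{1..N}. \<Sum>k\<in>{1..N}-{j}. \<Sum>i\<in>{1..n}.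
          q i (xs j) * q i (xs k) * k0 (\<phi> i (xs j)) (\<phi> i (xs k)))
   - 2 / (real n * real N ^ 2) *
       (\<Sum>j\<in>{1..N}. \<Sum>k\<in>{1..N}. \<Sum>i\<in>{1..n}.
          q i (xs j) * k0 (\<phi> i (xs j)) (ws k))
   + 1 / (real n * real N * (real N - 1)) *
       (\<Sum>j\<in>{1..N}. \<Sum>k\<in>{1..N}-{j}. k0 (ws j) (ws k))"

end

theory Submission imports Defs begin

lemma logit_meas[measurable]: "logit \<in> borel_measurable borel"
  unfolding logit_def by measurable

lemma vec_nth_meas[measurable]:
  "(\<lambda>x. (x :: real^'d) $ c) \<in> borel_measurable borel"
  by (intro borel_measurable_continuous_onI continuous_intros)

lemma k0_meas[measurable]:
  assumes [measurable]: "f \<in> borel_measurable M" "g \<in> borel_measurable M"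
  shows "(\<lambda>x. k0 (f x) (g x)) \<in> borel_measurable M"
proof -
  have [measurable]: "(\<lambda>x. logit (f x $ c)) \<in> borel_measurable M" for c
    by (rule measurable_compose[OF _ logit_meas], rule measurable_compose[OF _ vec_nth_meas]) fact
  have [measurable]: "(\<lambda>x. logit (g x $ c)) \<in> borel_measurable M" for c
    by (rule measurable_compose[OF _ logit_meas], rule measurable_compose[OF _ vec_nth_meas]) fact
  show ?thesis unfolding k0_def by measurable
qed

lemma k0_nonneg: "0 \<le> k0 x y"
  unfolding k0_def by (intro divide_nonneg_nonneg add_nonneg_nonneg sum_nonneg) auto

lemma k0_le1: "k0 x y \<le> 1"
proof -
  have "0 < real CARD('a) / 6" by simp
  moreover have "0 \<le> (\<Sum>c\<in>UNIV. (logit (x$c) - logit (y$c))^2)" by (intro sum_nonneg) auto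
  ultimately show ?thesis unfolding k0_def by (simp add: divide_le_eq_1 add_pos_nonneg)
qed

lemma unit_cube_cbox: "unit_cube = cbox (0::real^'d) 1"
  unfolding unit_cube_def by (auto simp: mem_box_cart)

lemma emeasure_unit_cube: "emeasure lborel (unit_cube :: (real^'d) set) = 1"
  unfolding unit_cube_cbox
  by (subst emeasure_lborel_cbox) (auto simp: Basis_vec_def inner_axis intro!: prod.neutral)

lemma prob_unif_cube: "prob_space (unif_cube :: (real^'d) measure)"
  unfolding unif_cube_def by (rule prob_space_uniform_measure) (auto simp: emeasure_unit_cube)

lemma sets_unif_cube[measurable_cong]: "sets (unif_cube :: (real^'d) measure) = sets borel"
  unfolding unif_cube_def by simp

lemma space_unif_cube[simp]: "space (unif_cube :: (real^'d) measure) = UNIV"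
  unfolding unif_cube_def by simp

lemma integral_unif_count:
  assumes "n \<ge> 1"
  shows "(\<integral>i. f i \<partial>uniform_measure (count_space UNIV) {1..n::nat}) = (\<Sum>i\<in>{1..n}. f i) / real n"
proof -
  have e: "emeasure (count_space UNIV) {1..n} = ennreal (real n)"
    by (simp add: ennreal_of_nat_eq_real_of_nat)
  have "uniform_measure (count_space UNIV) {1..n} = density (count_space UNIV) (\<lambda>i. ennreal (indicator {1..n} i / real n))"
    unfolding uniform_measure_def e
    using assms by (intro density_cong) (auto simp: indicator_def divide_ennreal[symmetric])
  then have "(\<integral>i. f i \<partial>uniform_measure (count_space UNIV) {1..n::nat}) =
       (\<integral>i. (indicator {1..n} i / real n) * f i \<partial>count_space UNIV)"
    by (simp add: integral_density)
  also have "\<dots> = (\<Sum>i | i \<in> UNIV \<and> (indicator {1..n} i / real n) * f i \<noteq> 0. (indicator {1..n} i / real n) * f i)"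
    by (rule lebesgue_integral_count_space_finite_support) (rule finite_subset[of _ "{1..n}"], auto simp: indicator_def split: if_splits)
  also have "\<dots> = (\<Sum>i\<in>{1..n}. (indicator {1..n} i / real n) * f i)"
    by (rule sum.mono_neutral_left) (auto simp: indicator_def split: if_splits)
  also have "\<dots> = (\<Sum>i\<in>{1..n}. f i) / real n"
    by (simp add: sum_divide_distrib)
  finally show ?thesis .
qed

lemma prob_unif_count: "n \<ge> 1 \<Longrightarrow> prob_space (uniform_measure (count_space UNIV) {1..n::nat})"
  by (rule prob_space_uniform_measure) (auto simp: emeasure_count_space_finite)

lemma bnd_integrable:
  assumes "finite_measure M" "f \<in> borel_measurable M" "\<And>x. x \<in> space M \<Longrightarrow> \<bar>f x\<bar> \<le> (B::real)"
  shows "integrable M f"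
  using assms by (intro finite_measure.integrable_const_bound[where B=B]) (auto intro!: AE_I2)

lemma abs_int_bound:
  assumes P: "prob_space P" and f: "f \<in> borel_measurable P" and B: "\<And>x. x \<in> space P \<Longrightarrow> \<bar>f x\<bar> \<le> (B::real)"
  shows "\<bar>\<integral>x. f x \<partial>P\<bar> \<le> B"
proof -
  interpret prob_space P by (rule P)
  have int: "integrable P f"
    using P f B by (intro bnd_integrable[where B=B]) (auto simp: finite_measure_axioms)
  have "\<bar>\<integral>x. f x \<partial>P\<bar> \<le> (\<integral>x. \<bar>f x\<bar> \<partial>P)"
    using integral_norm_bound[of P f] by simp
  also have "\<dots> \<le> B"
    using int B by (intro integral_le_const) (auto intro!: AE_I2)
  finally show ?thesis .
qed

lemma kZ_meas[measurable]:
  "(\<lambda>y. kZ (fst y) (snd y)) \<in> borel_measurable (((borel :: (real^'d) measure) \<Otimes>\<^sub>M count_space (UNIV::nat set)) \<Otimes>\<^sub>M ((borel :: (real^'d) measure) \<Otimes>\<^sub>M count_space (UNIV::nat set)))"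
proof -
  have [measurable]: "Measurable.pred (((borel :: (real^'d) measure) \<Otimes>\<^sub>M count_space (UNIV::nat set)) \<Otimes>\<^sub>M ((borel :: (real^'d) measure) \<Otimes>\<^sub>M count_space (UNIV::nat set))) (\<lambda>y. snd (fst y) = snd (snd y))"
  proof -
    have A: "\<And>i::nat. (\<lambda>y. i = snd (snd y)) \<in> measurable (((borel :: (real^'d) measure) \<Otimes>\<^sub>M count_space (UNIV::nat set)) \<Otimes>\<^sub>M ((borel :: (real^'d) measure) \<Otimes>\<^sub>M count_space (UNIV::nat set))) (count_space UNIV)"
      by measurable
    have B: "(\<lambda>y. snd (fst y)) \<in> measurable (((borel :: (real^'d) measure) \<Otimes>\<^sub>M count_space (UNIV::nat set)) \<Otimes>\<^sub>M ((borel :: (real^'d) measure) \<Otimes>\<^sub>M count_space (UNIV::nat set))) (count_space UNIV)"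
      by measurable
    from measurable_compose_countable[where f="\<lambda>i y. i = snd (snd y)", OF A B] show ?thesis by simp
  qed
  show ?thesis unfolding kZ_def by measurable
qed

lemma kZ_meas1[measurable]:
  "kZ u \<in> borel_measurable (borel \<Otimes>\<^sub>M count_space UNIV)"
  unfolding kZ_def by measurable

lemma kZ_nonneg: "0 \<le> kZ u v" and kZ_le1: "kZ u v \<le> 1"
  unfolding kZ_def by (auto simp: k0_nonneg k0_le1)

lemma kZ_abs: "\<bar>kZ u v\<bar> \<le> 1"
  using kZ_nonneg[of u v] kZ_le1[of u v] by simp

lemma distr_two_coords:
  assumes M: "prob_space M" and I: "finite I" "j \<in> I" "k \<in> I" "j \<noteq> k"
  shows "distr (PiM I (\<lambda>_. M)) (M \<Otimes>\<^sub>M M) (\<lambda>\<omega>. (\<omega> j, \<omega> k)) = M \<Otimes>\<^sub>M M"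
proof (rule pair_measure_eqI[symmetric])
  interpret P: prob_space M by (rule M)
  show "sigma_finite_measure M" by unfold_locales
  show "sigma_finite_measure M" by unfold_locales
  show "sets (M \<Otimes>\<^sub>M M) = sets (distr (PiM I (\<lambda>_. M)) (M \<Otimes>\<^sub>M M) (\<lambda>\<omega>. (\<omega> j, \<omega> k)))"
    by simp
  have meas: "(\<lambda>\<omega>. (\<omega> j, \<omega> k)) \<in> measurable (PiM I (\<lambda>_. M)) (M \<Otimes>\<^sub>M M)"
    using I by (intro measurable_Pair measurable_component_singleton) auto
  fix A B assume A: "A \<in> sets M" and B: "B \<in> sets M"
  then have AB: "A \<times> B \<in> sets (M \<Otimes>\<^sub>M M)" by simp
  have eq: "(\<lambda>\<omega>. (\<omega> j, \<omega> k)) -` (A \<times> B) \<inter> space (PiM I (\<lambda>_. M))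
      = prod_emb I (\<lambda>_. M) {j, k} (Pi\<^sub>E {j, k} (\<lambda>i. if i = j then A else B))"
    using I unfolding prod_emb_def space_PiM by (auto simp: PiE_iff)
  have "emeasure (distr (PiM I (\<lambda>_. M)) (M \<Otimes>\<^sub>M M) (\<lambda>\<omega>. (\<omega> j, \<omega> k))) (A \<times> B)
      = emeasure (PiM I (\<lambda>_. M)) (prod_emb I (\<lambda>_. M) {j, k} (Pi\<^sub>E {j, k} (\<lambda>i. if i = j then A else B)))"
    using meas AB by (simp add: emeasure_distr eq)
  also have "\<dots> = (\<Prod>i\<in>{j,k}. emeasure M (if i = j then A else B))"
    using I A B M by (intro emeasure_PiM_emb) auto
  also have "\<dots> = emeasure M A * emeasure M B"
    using I by simp
  finally show "emeasure M A * emeasure M B = emeasure (distr (PiM I (\<lambda>_. M)) (M \<Otimes>\<^sub>M M) (\<lambda>\<omega>. (\<omega> j, \<omega> k))) (A \<times> B)"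
    by simp
qed

lemma distr_pair_snd':
  assumes N: "prob_space N" and M: "sigma_finite_measure M"
  shows "distr (N \<Otimes>\<^sub>M M) M snd = M"
proof (intro measure_eqI)
  interpret N: prob_space N by (rule N)
  interpret M: sigma_finite_measure M by (rule M)
  fix A assume A: "A \<in> sets (distr (N \<Otimes>\<^sub>M M) M snd)"
  from A have "emeasure (distr (N \<Otimes>\<^sub>M M) M snd) A = emeasure (N \<Otimes>\<^sub>M M) (space N \<times> A)"
    by (auto simp add: emeasure_distr space_pair_measure dest: sets.sets_into_space intro!: arg_cong2[where f=emeasure])
  with A show "emeasure (distr (N \<Otimes>\<^sub>M M) M snd) A = emeasure M A"
    by (simp add: M.emeasure_pair_measure_Times N.emeasure_space_1)
qed simp

lemma E_fst:
  assumes M: "prob_space M" and Q: "prob_space Q" and I: "finite I" "j \<in> I" "k \<in> I" "j \<noteq> k"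
    and f: "integrable (M \<Otimes>\<^sub>M M) (f :: _ \<Rightarrow> real)"
  shows "integrable (PiM I (\<lambda>_. M) \<Otimes>\<^sub>M Q) (\<lambda>s. f (fst s j, fst s k))"
    and "(\<integral>s. f (fst s j, fst s k) \<partial>(PiM I (\<lambda>_. M) \<Otimes>\<^sub>M Q)) = integral\<^sup>L (M \<Otimes>\<^sub>M M) f"
proof -
  interpret Q: prob_space Q by (rule Q)
  have g1: "(\<lambda>\<omega>. (\<omega> j, \<omega> k)) \<in> measurable (PiM I (\<lambda>_. M)) (M \<Otimes>\<^sub>M M)"
    using I by (intro measurable_Pair measurable_component_singleton) auto
  have g: "(\<lambda>s. (fst s j, fst s k)) \<in> measurable (PiM I (\<lambda>_. M) \<Otimes>\<^sub>M Q) (M \<Otimes>\<^sub>M M)"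
    using measurable_comp[OF measurable_fst g1] by (simp add: comp_def)
  have fm: "f \<in> borel_measurable (M \<Otimes>\<^sub>M M)" using f by (rule borel_measurable_integrable)
  have D: "distr (PiM I (\<lambda>_. M) \<Otimes>\<^sub>M Q) (M \<Otimes>\<^sub>M M) (\<lambda>s. (fst s j, fst s k)) = M \<Otimes>\<^sub>M M"
  proof -
    have "distr (PiM I (\<lambda>_. M) \<Otimes>\<^sub>M Q) (M \<Otimes>\<^sub>M M) (\<lambda>s. (fst s j, fst s k))
        = distr (distr (PiM I (\<lambda>_. M) \<Otimes>\<^sub>M Q) (PiM I (\<lambda>_. M)) fst) (M \<Otimes>\<^sub>M M) (\<lambda>\<omega>. (\<omega> j, \<omega> k))"
      using distr_distr[OF g1 measurable_fst[of "PiM I (\<lambda>_. M)" Q]] by (simp add: comp_def)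
    also have "\<dots> = distr (PiM I (\<lambda>_. M)) (M \<Otimes>\<^sub>M M) (\<lambda>\<omega>. (\<omega> j, \<omega> k))"
      by (simp add: Q.distr_pair_fst)
    also have "\<dots> = M \<Otimes>\<^sub>M M" by (rule distr_two_coords[OF M I])
    finally show ?thesis .
  qed
  show "integrable (PiM I (\<lambda>_. M) \<Otimes>\<^sub>M Q) (\<lambda>s. f (fst s j, fst s k))"
    using integrable_distr_eq[OF g fm] f D by simp
  show "(\<integral>s. f (fst s j, fst s k) \<partial>(PiM I (\<lambda>_. M) \<Otimes>\<^sub>M Q)) = integral\<^sup>L (M \<Otimes>\<^sub>M M) f"
    using integral_distr[OF g fm] D by simp
qed

lemma E_snd:
  assumes M: "prob_space M" and Q: "prob_space Q" and I: "finite I" "j \<in> I" "k \<in> I" "j \<noteq> k"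
    and f: "integrable (M \<Otimes>\<^sub>M M) (f :: _ \<Rightarrow> real)"
  shows "integrable (Q \<Otimes>\<^sub>M PiM I (\<lambda>_. M)) (\<lambda>s. f (snd s j, snd s k))"
    and "(\<integral>s. f (snd s j, snd s k) \<partial>(Q \<Otimes>\<^sub>M PiM I (\<lambda>_. M))) = integral\<^sup>L (M \<Otimes>\<^sub>M M) f"
proof -
  interpret Q: prob_space Q by (rule Q)
  interpret P: prob_space "PiM I (\<lambda>_. M)" by (rule prob_space_PiM) (rule M)
  have g1: "(\<lambda>\<omega>. (\<omega> j, \<omega> k)) \<in> measurable (PiM I (\<lambda>_. M)) (M \<Otimes>\<^sub>M M)"
    using I by (intro measurable_Pair measurable_component_singleton) auto
  have g: "(\<lambda>s. (snd s j, snd s k)) \<in> measurable (Q \<Otimes>\<^sub>M PiM I (\<lambda>_. M)) (M \<Otimes>\<^sub>M M)"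
    using measurable_comp[OF measurable_snd g1] by (simp add: comp_def)
  have fm: "f \<in> borel_measurable (M \<Otimes>\<^sub>M M)" using f by (rule borel_measurable_integrable)
  have D: "distr (Q \<Otimes>\<^sub>M PiM I (\<lambda>_. M)) (M \<Otimes>\<^sub>M M) (\<lambda>s. (snd s j, snd s k)) = M \<Otimes>\<^sub>M M"
  proof -
    have "distr (Q \<Otimes>\<^sub>M PiM I (\<lambda>_. M)) (M \<Otimes>\<^sub>M M) (\<lambda>s. (snd s j, snd s k))
        = distr (distr (Q \<Otimes>\<^sub>M PiM I (\<lambda>_. M)) (PiM I (\<lambda>_. M)) snd) (M \<Otimes>\<^sub>M M) (\<lambda>\<omega>. (\<omega> j, \<omega> k))"
      using distr_distr[OF g1 measurable_snd[of Q "PiM I (\<lambda>_. M)"]] by (simp add: comp_def)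
    also have "\<dots> = distr (PiM I (\<lambda>_. M)) (M \<Otimes>\<^sub>M M) (\<lambda>\<omega>. (\<omega> j, \<omega> k))"
      by (simp add: distr_pair_snd'[OF Q] P.sigma_finite_measure_axioms)
    also have "\<dots> = M \<Otimes>\<^sub>M M" by (rule distr_two_coords[OF M I])
    finally show ?thesis .
  qed
  show "integrable (Q \<Otimes>\<^sub>M PiM I (\<lambda>_. M)) (\<lambda>s. f (snd s j, snd s k))"
    using integrable_distr_eq[OF g fm] f D by simp
  show "(\<integral>s. f (snd s j, snd s k) \<partial>(Q \<Otimes>\<^sub>M PiM I (\<lambda>_. M))) = integral\<^sup>L (M \<Otimes>\<^sub>M M) f"
    using integral_distr[OF g fm] D by simp
qed

lemma E_mix:
  assumes M: "prob_space M" and U: "prob_space U" and I: "j \<in> I" "k \<in> I"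
    and f: "integrable (M \<Otimes>\<^sub>M U) (f :: _ \<Rightarrow> real)"
  shows "integrable (PiM I (\<lambda>_. M) \<Otimes>\<^sub>M PiM I (\<lambda>_. U)) (\<lambda>s. f (fst s j, snd s k))"
    and "(\<integral>s. f (fst s j, snd s k) \<partial>(PiM I (\<lambda>_. M) \<Otimes>\<^sub>M PiM I (\<lambda>_. U))) = integral\<^sup>L (M \<Otimes>\<^sub>M U) f"
proof -
  interpret PM: product_prob_space "\<lambda>_. M" I by (rule product_prob_spaceI) (rule M)
  interpret PU: product_prob_space "\<lambda>_. U" I by (rule product_prob_spaceI) (rule U)
  interpret UU: prob_space U by (rule U)
  have c1: "distr (PiM I (\<lambda>_. M)) M (\<lambda>\<omega>. \<omega> j) = M" using PM.PiM_component[OF I(1)] by simp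
  have c2: "distr (PiM I (\<lambda>_. U)) U (\<lambda>\<omega>. \<omega> k) = U" using PU.PiM_component[OF I(2)] by simp
  have m1: "(\<lambda>\<omega>. \<omega> j) \<in> measurable (PiM I (\<lambda>_. M)) M" using I by (intro measurable_component_singleton) auto
  have m2: "(\<lambda>\<omega>. \<omega> k) \<in> measurable (PiM I (\<lambda>_. U)) U" using I by (intro measurable_component_singleton) auto
  have "M \<Otimes>\<^sub>M U = distr (PiM I (\<lambda>_. M) \<Otimes>\<^sub>M PiM I (\<lambda>_. U)) (M \<Otimes>\<^sub>M U) (\<lambda>(x, y). (x j, y k))"
    using pair_measure_distr[OF m1 m2] c1 c2 prob_space_imp_sigma_finite[OF U] by simp
  also have "(\<lambda>(x, y). (x j, y k)) = (\<lambda>s. (fst s j, snd s k))" by (auto simp: fun_eq_iff)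
  finally have D: "distr (PiM I (\<lambda>_. M) \<Otimes>\<^sub>M PiM I (\<lambda>_. U)) (M \<Otimes>\<^sub>M U) (\<lambda>s. (fst s j, snd s k)) = M \<Otimes>\<^sub>M U" by simp
  have g: "(\<lambda>s. (fst s j, snd s k)) \<in> measurable (PiM I (\<lambda>_. M) \<Otimes>\<^sub>M PiM I (\<lambda>_. U)) (M \<Otimes>\<^sub>M U)"
    using m1 m2 by (intro measurable_Pair measurable_comp[OF measurable_fst m1, unfolded comp_def]
        measurable_comp[OF measurable_snd m2, unfolded comp_def])
  have fm: "f \<in> borel_measurable (M \<Otimes>\<^sub>M U)" using f by (rule borel_measurable_integrable)
  show "integrable (PiM I (\<lambda>_. M) \<Otimes>\<^sub>M PiM I (\<lambda>_. U)) (\<lambda>s. f (fst s j, snd s k))"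
    using integrable_distr_eq[OF g fm] f D by simp
  show "(\<integral>s. f (fst s j, snd s k) \<partial>(PiM I (\<lambda>_. M) \<Otimes>\<^sub>M PiM I (\<lambda>_. U))) = integral\<^sup>L (M \<Otimes>\<^sub>M U) f"
    using integral_distr[OF g fm] D by simp
qed

locale setting =
  fixes M :: "'a measure" and n :: nat and q :: "nat \<Rightarrow> 'a \<Rightarrow> real" and \<phi> :: "nat \<Rightarrow> 'a \<Rightarrow> real^'d"
  assumes prob: "prob_space M" and n1: "n \<ge> 1"
    and phim: "\<And>i. i \<in> {1..n} \<Longrightarrow> \<phi> i \<in> borel_measurable M"
    and qm: "\<And>i. i \<in> {1..n} \<Longrightarrow> q i \<in> borel_measurable M"
    and q01: "\<And>i x. i \<in> {1..n} \<Longrightarrow> x \<in> space M \<Longrightarrow> 0 \<le> q i x \<and> q i x \<le> 1"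
    and qsum: "\<And>x. x \<in> space M \<Longrightarrow> (\<Sum>i\<in>{1..n}. q i x) = 1"
begin

definition "C = count_space {1..n}"
definition "D = density (M \<Otimes>\<^sub>M C) (\<lambda>z. ennreal (q (snd z) (fst z)))"
definition "g = (\<lambda>z. (\<phi> (snd z) (fst z), snd z))"

lemma space_C[simp]: "space C = {1..n}" by (simp add: C_def)

lemma finC: "finite_measure C"
  unfolding C_def by (rule finite_measure_count_space) simp

lemma sfC: "sigma_finite_measure C"
  using finC by (rule finite_measure.axioms)

lemma g_meas: "g \<in> measurable (M \<Otimes>\<^sub>M C) (borel \<Otimes>\<^sub>M count_space UNIV)"
  unfolding g_def C_def
  by (rule measurable_compose_countable'[where f="\<lambda>i z. (\<phi> i (fst z), i)" and g=snd and I="{1..n}"])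
     (auto intro!: measurable_Pair measurable_compose[OF measurable_fst phim])

lemma gD: "g \<in> measurable D (borel \<Otimes>\<^sub>M count_space UNIV)"
  using g_meas by (simp add: D_def)

lemma qp_meas: "(\<lambda>z. q (snd z) (fst z)) \<in> borel_measurable (M \<Otimes>\<^sub>M C)"
  unfolding C_def
  by (rule measurable_compose_countable'[where f="\<lambda>i z. q i (fst z)" and g=snd and I="{1..n}"])
     (auto intro!: measurable_compose[OF measurable_fst qm])

lemma eqp_meas: "(\<lambda>z. ennreal (q (snd z) (fst z))) \<in> borel_measurable (M \<Otimes>\<^sub>M C)"
  using measurable_compose[OF qp_meas measurable_ennreal] by simp

lemma pZ_eq: "p_Z M n q \<phi> = distr D (borel \<Otimes>\<^sub>M count_space UNIV) g"
proof -
  let ?R = "distr D (borel \<Otimes>\<^sub>M count_space UNIV) g"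
  let ?X = "borel \<Otimes>\<^sub>M count_space UNIV :: ((real^'d) \<times> nat) measure"
  have spX: "space ?X = UNIV" by (simp add: space_pair_measure)
  have "?R = measure_of (space ?R) (sets ?R) (emeasure ?R)" by (rule measure_of_of_measure[symmetric])
  also have "\<dots> = measure_of UNIV (sets ?X) (emeasure ?R)" unfolding sets_distr space_distr spX ..
  finally have R: "?R = measure_of UNIV (sets ?X) (emeasure ?R)" .
  have "p_Z M n q \<phi> = measure_of UNIV (sets ?X) (emeasure ?R)"
    unfolding p_Z_def
  proof (rule measure_of_eq)
    show "sets ?X \<subseteq> Pow UNIV" by simp
    fix a assume "a \<in> sigma_sets UNIV (sets ?X)"
    moreover have "sigma_sets UNIV (sets ?X) = sets ?X" using sets.sigma_sets_eq[of ?X] unfolding spX .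
    ultimately have a: "a \<in> sets ?X" by simp
    interpret Cs: sigma_finite_measure C by (rule sfC)
    have gm: "g -` a \<inter> space (M \<Otimes>\<^sub>M C) \<in> sets (M \<Otimes>\<^sub>M C)"
      using g_meas a by (rule measurable_sets)
    have "emeasure ?R a = emeasure D (g -` a \<inter> space D)"
      using g_meas a by (simp add: emeasure_distr D_def)
    also have "\<dots> = (\<integral>\<^sup>+z. ennreal (q (snd z) (fst z)) * indicator (g -` a \<inter> space (M \<Otimes>\<^sub>M C)) z \<partial>(M \<Otimes>\<^sub>M C))"
      unfolding D_def using gm qp_meas by (simp add: emeasure_density)
    also have "\<dots> = (\<integral>\<^sup>+x. \<integral>\<^sup>+i. ennreal (q i x) * indicator (g -` a \<inter> space (M \<Otimes>\<^sub>M C)) (x, i) \<partial>C \<partial>M)"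
      using gm qp_meas by (subst Cs.nn_integral_fst[symmetric]) auto
    also have "\<dots> = (\<integral>\<^sup>+x. (\<Sum>i\<in>{1..n}. ennreal (q i x) * indicator a (\<phi> i x, i)) \<partial>M)"
      by (intro nn_integral_cong)
         (auto simp: C_def nn_integral_count_space_finite space_pair_measure g_def indicator_def intro!: sum.cong)
    finally show "(\<integral>\<^sup>+x. (\<Sum>i\<in>{1..n}. ennreal (q i x) * indicator a (\<phi> i x, i)) \<partial>M) = emeasure ?R a" by (rule sym)
  qed
  with R show ?thesis by simp
qed

lemma sets_pZ: "sets (p_Z M n q \<phi>) = sets (borel \<Otimes>\<^sub>M count_space UNIV)"
  by (simp add: pZ_eq)

lemma space_pZ[simp]: "space (p_Z M n q \<phi>) = UNIV"
  by (simp add: pZ_eq space_pair_measure)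

lemma prob_pZ: "prob_space (p_Z M n q \<phi>)"
proof (rule prob_spaceI)
  interpret Cs: sigma_finite_measure C by (rule sfC)
  interpret P: prob_space M by (rule prob)
  have "emeasure (p_Z M n q \<phi>) (space (p_Z M n q \<phi>)) = emeasure (distr D (borel \<Otimes>\<^sub>M count_space UNIV) g) (space (borel \<Otimes>\<^sub>M count_space UNIV))"
    by (simp add: pZ_eq)
  also have "\<dots> = emeasure D (space D)"
  proof -
      have "g -` space (borel \<Otimes>\<^sub>M count_space UNIV) \<inter> space D = space D"
        by (simp add: space_pair_measure)
      with emeasure_distr[OF gD sets.top] show ?thesis by simp
    qed
  also have "\<dots> = (\<integral>\<^sup>+z. ennreal (q (snd z) (fst z)) \<partial>(M \<Otimes>\<^sub>M C))"
    unfolding D_def by (subst emeasure_density) (auto intro!: nn_integral_cong simp: eqp_meas)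
  also have "\<dots> = (\<integral>\<^sup>+x. \<integral>\<^sup>+i. ennreal (q i x) \<partial>C \<partial>M)"
  proof -
      have "(\<lambda>z. ennreal (q (snd z) (fst z))) \<in> borel_measurable (M \<Otimes>\<^sub>M C)"
        using measurable_compose[OF qp_meas measurable_ennreal] by simp
      from Cs.nn_integral_fst[OF this] show ?thesis by simp
    qed
  also have "\<dots> = (\<integral>\<^sup>+x. 1 \<partial>M)"
    proof (intro nn_integral_cong)
      fix x assume x: "x \<in> space M"
      have "(\<integral>\<^sup>+i. ennreal (q i x) \<partial>C) = (\<Sum>i\<in>{1..n}. ennreal (q i x))"
        unfolding C_def by (simp add: nn_integral_count_space_finite)
      also have "\<dots> = ennreal (\<Sum>i\<in>{1..n}. q i x)"
        using q01 x by (intro sum_ennreal) auto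
      also have "\<dots> = 1" using qsum x by simp
      finally show "(\<integral>\<^sup>+i. ennreal (q i x) \<partial>C) = 1" .
    qed
  also have "\<dots> = 1" using P.emeasure_space_1 by simp
  finally show "emeasure (p_Z M n q \<phi>) (space (p_Z M n q \<phi>)) = 1" .
qed

lemma int_pZ:
  assumes f[measurable]: "f \<in> borel_measurable (borel \<Otimes>\<^sub>M count_space UNIV)" and B: "\<And>z. \<bar>f z\<bar> \<le> B"
  shows "(\<integral>z. f z \<partial>p_Z M n q \<phi>) = (\<integral>x. (\<Sum>i\<in>{1..n}. q i x * f (\<phi> i x, i)) \<partial>M)"
proof -
  interpret Cs: finite_measure C by (rule finC)
  interpret P: prob_space M by (rule prob)
  interpret PC: pair_sigma_finite M C by unfold_locales
  have fg: "(\<lambda>z. f (g z)) \<in> borel_measurable (M \<Otimes>\<^sub>M C)"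
    using measurable_compose[OF g_meas f] .
  have "(\<integral>z. f z \<partial>p_Z M n q \<phi>) = (\<integral>z. f (g z) \<partial>D)"
    unfolding pZ_eq using gD f by (rule integral_distr)
  also have "\<dots> = (\<integral>z. q (snd z) (fst z) * f (g z) \<partial>(M \<Otimes>\<^sub>M C))"
    unfolding D_def
    by (subst integral_density) (auto simp: qp_meas fg space_pair_measure q01 intro!: AE_I2)
  also have "\<dots> = (\<integral>x. \<integral>i. q i x * f (g (x, i)) \<partial>C \<partial>M)"
  proof -
    have "integrable (M \<Otimes>\<^sub>M C) (\<lambda>z. q (snd z) (fst z) * f (g z))"
    proof (rule bnd_integrable[where B="\<bar>B\<bar>"])
      show "finite_measure (M \<Otimes>\<^sub>M C)"
        by (intro finite_measure_pair_measure finC) (simp add: P.finite_measure_axioms)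
      show "(\<lambda>z. q (snd z) (fst z) * f (g z)) \<in> borel_measurable (M \<Otimes>\<^sub>M C)"
        using qp_meas fg by measurable
      fix z assume "z \<in> space (M \<Otimes>\<^sub>M C)"
      then have "0 \<le> q (snd z) (fst z)" "q (snd z) (fst z) \<le> 1"
        using q01 by (auto simp: space_pair_measure C_def)
      moreover have "\<bar>f (g z)\<bar> \<le> \<bar>B\<bar>" using B[of "g z"] by simp
      ultimately show "\<bar>q (snd z) (fst z) * f (g z)\<bar> \<le> \<bar>B\<bar>"
        by (simp add: abs_mult mult_le_one mult_mono' order_trans[OF mult_right_mono[of _ 1]])
    qed
    from PC.integral_fst'[OF this] show ?thesis by simp
  qed
  also have "\<dots> = (\<integral>x. (\<Sum>i\<in>{1..n}. q i x * f (\<phi> i x, i)) \<partial>M)"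
    by (intro Bochner_Integration.integral_cong) (auto simp: C_def lebesgue_integral_count_space_finite g_def)
  finally show ?thesis .
qed

lemma int_UZ:
  assumes f: "f \<in> borel_measurable (borel \<Otimes>\<^sub>M count_space UNIV)" and B: "\<And>z. \<bar>f z\<bar> \<le> B"
  shows "(\<integral>z. f z \<partial>(unif_Z n :: ((real^'d) \<times> nat) measure)) = (\<integral>w. (\<Sum>l\<in>{1..n}. f (w, l)) / real n \<partial>(unif_cube :: (real^'d) measure))"
proof -
  let ?Un = "uniform_measure (count_space UNIV) {1..n}"
  interpret U: prob_space "unif_cube :: (real^'d) measure" by (rule prob_unif_cube)
  interpret Un: prob_space ?Un by (rule prob_unif_count[OF n1])
  interpret UU: pair_prob_space "unif_cube :: (real^'d) measure" ?Un by unfold_locales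
  have sets: "sets ((unif_cube :: (real^'d) measure) \<Otimes>\<^sub>M ?Un) = sets (borel \<Otimes>\<^sub>M count_space UNIV)"
    by (intro sets_pair_measure_cong sets_unif_cube) simp
  have fm: "f \<in> borel_measurable ((unif_cube :: (real^'d) measure) \<Otimes>\<^sub>M ?Un)"
    using f by (simp add: measurable_cong_sets[OF sets refl])
  have int: "integrable ((unif_cube :: (real^'d) measure) \<Otimes>\<^sub>M ?Un) f"
  proof (rule bnd_integrable[where B=B])
    show "finite_measure ((unif_cube :: (real^'d) measure) \<Otimes>\<^sub>M ?Un)"
      by (intro finite_measure_pair_measure U.finite_measure_axioms Un.finite_measure_axioms)
  qed (use fm B in auto)
  have "(\<integral>z. f z \<partial>(unif_Z n :: ((real^'d) \<times> nat) measure)) = (\<integral>w. \<integral>l. f (w, l) \<partial>?Un \<partial>(unif_cube :: (real^'d) measure))"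
    unfolding unif_Z_def using UU.integral_fst'[OF int] by simp
  also have "\<dots> = (\<integral>w. (\<Sum>l\<in>{1..n}. f (w, l)) / real n \<partial>(unif_cube :: (real^'d) measure))"
    by (intro Bochner_Integration.integral_cong refl integral_unif_count n1)
  finally show ?thesis .
qed

lemma sum_abs_le_n:
  assumes "\<And>i. i \<in> {1..n} \<Longrightarrow> \<bar>a i\<bar> \<le> (1::real)"
  shows "\<bar>\<Sum>i\<in>{1..n}. a i\<bar> \<le> real n"
proof -
  have "\<bar>\<Sum>i\<in>{1..n}. a i\<bar> \<le> (\<Sum>i\<in>{1..n}. \<bar>a i\<bar>)" by (rule sum_abs)
  also have "\<dots> \<le> (\<Sum>i\<in>{1..n}. 1)" using assms by (intro sum_mono) auto
  finally show ?thesis by simp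
qed

lemma q_abs: "i \<in> {1..n} \<Longrightarrow> x \<in> space M \<Longrightarrow> \<bar>q i x\<bar> \<le> 1"
  using q01[of i x] by auto

lemma k0_abs: "\<bar>k0 a b\<bar> \<le> 1"
  using k0_nonneg[of a b] k0_le1[of a b] by simp

lemma abs_prod_le1: "\<bar>a\<bar> \<le> 1 \<Longrightarrow> \<bar>b\<bar> \<le> 1 \<Longrightarrow> \<bar>a * b\<bar> \<le> (1::real)"
  by (simp add: abs_mult mult_le_one)

definition "h1 = (\<lambda>z. \<Sum>i\<in>{1..n}. q i (fst z) * q i (snd z) * k0 (\<phi> i (fst z)) (\<phi> i (snd z)))"

lemma h1_meas: "h1 \<in> borel_measurable (M \<Otimes>\<^sub>M M)"
  unfolding h1_def
proof (rule borel_measurable_sum)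
  fix i assume i: "i \<in> {1..n}"
  note [measurable] = qm[OF i] phim[OF i]
  show "(\<lambda>z. q i (fst z) * q i (snd z) * k0 (\<phi> i (fst z)) (\<phi> i (snd z))) \<in> borel_measurable (M \<Otimes>\<^sub>M M)"
    by measurable
qed

lemma h1_int: "integrable (M \<Otimes>\<^sub>M M) h1"
proof (rule bnd_integrable[where B="real n"])
  interpret P: prob_space M by (rule prob)
  interpret MM: pair_prob_space M M ..
  show "finite_measure (M \<Otimes>\<^sub>M M)" by (rule MM.finite_measure_axioms)
  show "h1 \<in> borel_measurable (M \<Otimes>\<^sub>M M)" by (rule h1_meas)
  fix z assume z: "z \<in> space (M \<Otimes>\<^sub>M M)"
  then show "\<bar>h1 z\<bar> \<le> real n"
    unfolding h1_def
    by (intro sum_abs_le_n abs_prod_le1 q_abs k0_abs) (auto simp: space_pair_measure)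
qed

lemma qk_int: "i \<in> {1..n} \<Longrightarrow> integrable M (\<lambda>y. q i y * k0 a (\<phi> i y))"
proof -
  assume i: "i \<in> {1..n}"
  note [measurable] = qm[OF i] phim[OF i]
  interpret P: prob_space M by (rule prob)
  show ?thesis
    by (rule bnd_integrable[where B=1]) (auto intro!: abs_prod_le1 q_abs k0_abs i simp: P.finite_measure_axioms)
qed

lemma T1: "(\<integral>y. kZ (fst y) (snd y) \<partial>(p_Z M n q \<phi> \<Otimes>\<^sub>M p_Z M n q \<phi>)) = (\<integral>z. h1 z \<partial>(M \<Otimes>\<^sub>M M))"
proof -
  let ?p = "p_Z M n q \<phi>"
  let ?X = "(borel :: (real^'d) measure) \<Otimes>\<^sub>M count_space (UNIV :: nat set)"
  interpret P: prob_space M by (rule prob)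
  interpret Pp: prob_space ?p by (rule prob_pZ)
  interpret PP: pair_prob_space ?p ?p ..
  interpret MM: pair_prob_space M M ..
  have sets_pp: "sets (?p \<Otimes>\<^sub>M ?p) = sets (?X \<Otimes>\<^sub>M ?X)" by (intro sets_pair_measure_cong sets_pZ)
  have kp: "(\<lambda>y. kZ (fst y) (snd y)) \<in> borel_measurable (?p \<Otimes>\<^sub>M ?p)"
    using kZ_meas by (simp add: measurable_cong_sets[OF sets_pp refl])
  have intk: "integrable (?p \<Otimes>\<^sub>M ?p) (\<lambda>y. kZ (fst y) (snd y))"
    by (rule bnd_integrable[where B=1]) (auto simp: kp kZ_abs PP.finite_measure_axioms)
  define G where "G u = (\<integral>v. kZ u v \<partial>?p)" for u
  have "(\<integral>y. kZ (fst y) (snd y) \<partial>(?p \<Otimes>\<^sub>M ?p)) = (\<integral>u. G u \<partial>?p)"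
    using PP.integral_fst'[OF intk] by (simp add: G_def)
  also have "\<dots> = (\<integral>x. (\<Sum>i\<in>{1..n}. q i x * G (\<phi> i x, i)) \<partial>M)"
  proof (rule int_pZ)
    have sets_xp: "sets (?X \<Otimes>\<^sub>M ?p) = sets (?X \<Otimes>\<^sub>M ?X)" by (intro sets_pair_measure_cong sets_pZ refl)
    have "(\<lambda>(u, v). kZ u v) \<in> borel_measurable (?X \<Otimes>\<^sub>M ?p)"
      using kZ_meas by (simp add: measurable_cong_sets[OF sets_xp refl] case_prod_beta')
    then show "G \<in> borel_measurable ?X"
      unfolding G_def by (rule Pp.borel_measurable_lebesgue_integral)
    fix u show "\<bar>G u\<bar> \<le> 1"
      unfolding G_def by (rule abs_int_bound) (auto simp: prob_pZ sets_pZ kZ_abs measurable_cong_sets[OF sets_pZ refl])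
  qed
  also have "\<dots> = (\<integral>x. (\<integral>y. h1 (x, y) \<partial>M) \<partial>M)"
  proof (intro Bochner_Integration.integral_cong refl)
    fix x assume x: "x \<in> space M"
    have "G (\<phi> i x, i) = (\<integral>y. q i y * k0 (\<phi> i x) (\<phi> i y) \<partial>M)" if i: "i \<in> {1..n}" for i
    proof -
      have "G (\<phi> i x, i) = (\<integral>y. (\<Sum>l\<in>{1..n}. q l y * kZ (\<phi> i x, i) (\<phi> l y, l)) \<partial>M)"
        unfolding G_def by (rule int_pZ[OF kZ_meas1 kZ_abs])
      also have "\<dots> = (\<integral>y. q i y * k0 (\<phi> i x) (\<phi> i y) \<partial>M)"
      proof (intro Bochner_Integration.integral_cong refl)
        fix y
        have "(\<Sum>l\<in>{1..n}. q l y * kZ (\<phi> i x, i) (\<phi> l y, l)) = (\<Sum>l\<in>{1..n}. if i = l then q i y * k0 (\<phi> i x) (\<phi> i y) else 0)"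
          by (intro sum.cong) (auto simp: kZ_def)
        also have "\<dots> = q i y * k0 (\<phi> i x) (\<phi> i y)" using i by simp
        finally show "(\<Sum>l\<in>{1..n}. q l y * kZ (\<phi> i x, i) (\<phi> l y, l)) = q i y * k0 (\<phi> i x) (\<phi> i y)" .
      qed
      finally show ?thesis .
    qed
    then have "(\<Sum>i\<in>{1..n}. q i x * G (\<phi> i x, i)) = (\<Sum>i\<in>{1..n}. q i x * (\<integral>y. q i y * k0 (\<phi> i x) (\<phi> i y) \<partial>M))"
      by (intro sum.cong) auto
    also have "\<dots> = (\<Sum>i\<in>{1..n}. (\<integral>y. q i x * (q i y * k0 (\<phi> i x) (\<phi> i y)) \<partial>M))"
      by (intro sum.cong refl integral_mult_right_zero[symmetric])
    also have "\<dots> = (\<integral>y. (\<Sum>i\<in>{1..n}. q i x * (q i y * k0 (\<phi> i x) (\<phi> i y))) \<partial>M)"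
      by (rule Bochner_Integration.integral_sum[where f="\<lambda>i y. q i x * (q i y * k0 (\<phi> i x) (\<phi> i y))", symmetric])
         (auto intro!: integrable_mult_right qk_int)
    also have "\<dots> = (\<integral>y. h1 (x, y) \<partial>M)"
      unfolding h1_def by (simp add: mult.assoc)
    finally show "(\<Sum>i\<in>{1..n}. q i x * G (\<phi> i x, i)) = (\<integral>y. h1 (x, y) \<partial>M)" .
  qed
  also have "\<dots> = (\<integral>z. h1 z \<partial>(M \<Otimes>\<^sub>M M))"
    by (rule MM.integral_fst'[OF h1_int])
  finally show ?thesis .
qed

lemma prob_UZ: "prob_space (unif_Z n :: ((real^'d) \<times> nat) measure)"
proof -
  interpret U: prob_space "unif_cube :: (real^'d) measure" by (rule prob_unif_cube)
  interpret Un: prob_space "uniform_measure (count_space UNIV) {1..n}" by (rule prob_unif_count[OF n1])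
  interpret UU: pair_prob_space "unif_cube :: (real^'d) measure" "uniform_measure (count_space UNIV) {1..n}" ..
  show ?thesis unfolding unif_Z_def by (rule UU.prob_space_axioms)
qed

lemma sets_UZ: "sets (unif_Z n :: ((real^'d) \<times> nat) measure) = sets ((borel :: (real^'d) measure) \<Otimes>\<^sub>M count_space (UNIV :: nat set))"
  unfolding unif_Z_def by (intro sets_pair_measure_cong sets_unif_cube) simp

lemma k0_int_U: "integrable (unif_cube :: (real^'d) measure) (\<lambda>w. k0 a w)"
proof -
  interpret U: prob_space "unif_cube :: (real^'d) measure" by (rule prob_unif_cube)
  show ?thesis
    by (rule bnd_integrable[where B=1]) (auto simp: k0_abs U.finite_measure_axioms)
qed

definition "h2 = (\<lambda>z. \<Sum>i\<in>{1..n}. q i (fst z) * k0 (\<phi> i (fst z)) (snd z))"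

lemma h2_int: "integrable (M \<Otimes>\<^sub>M (unif_cube :: (real^'d) measure)) h2"
proof (rule bnd_integrable[where B="real n"])
  interpret P: prob_space M by (rule prob)
  interpret U: prob_space "unif_cube :: (real^'d) measure" by (rule prob_unif_cube)
  interpret MU: pair_prob_space M "unif_cube :: (real^'d) measure" ..
  show "finite_measure (M \<Otimes>\<^sub>M (unif_cube :: (real^'d) measure))" by (rule MU.finite_measure_axioms)
  show "h2 \<in> borel_measurable (M \<Otimes>\<^sub>M (unif_cube :: (real^'d) measure))"
    unfolding h2_def
  proof (rule borel_measurable_sum)
    fix i assume i: "i \<in> {1..n}"
    note [measurable] = qm[OF i] phim[OF i]
    show "(\<lambda>z. q i (fst z) * k0 (\<phi> i (fst z)) (snd z)) \<in> borel_measurable (M \<Otimes>\<^sub>M (unif_cube :: (real^'d) measure))"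
      by measurable
  qed
  fix z assume z: "z \<in> space (M \<Otimes>\<^sub>M (unif_cube :: (real^'d) measure))"
  then show "\<bar>h2 z\<bar> \<le> real n"
    unfolding h2_def
    by (intro sum_abs_le_n abs_prod_le1 q_abs k0_abs) (auto simp: space_pair_measure)
qed

lemma T2: "(\<integral>y. kZ (fst y) (snd y) \<partial>(p_Z M n q \<phi> \<Otimes>\<^sub>M (unif_Z n :: ((real^'d) \<times> nat) measure)))
   = (\<integral>z. h2 z \<partial>(M \<Otimes>\<^sub>M (unif_cube :: (real^'d) measure))) / real n"
proof -
  let ?p = "p_Z M n q \<phi>"
  let ?UZ = "unif_Z n :: ((real^'d) \<times> nat) measure"
  let ?U = "unif_cube :: (real^'d) measure"
  let ?X = "(borel :: (real^'d) measure) \<Otimes>\<^sub>M count_space (UNIV :: nat set)"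
  interpret P: prob_space M by (rule prob)
  interpret Pp: prob_space ?p by (rule prob_pZ)
  interpret UZ: prob_space ?UZ by (rule prob_UZ)
  interpret U: prob_space ?U by (rule prob_unif_cube)
  interpret PP: pair_prob_space ?p ?UZ ..
  interpret MU: pair_prob_space M ?U ..
  have sets_pp: "sets (?p \<Otimes>\<^sub>M ?UZ) = sets (?X \<Otimes>\<^sub>M ?X)" by (intro sets_pair_measure_cong sets_pZ sets_UZ)
  have kp: "(\<lambda>y. kZ (fst y) (snd y)) \<in> borel_measurable (?p \<Otimes>\<^sub>M ?UZ)"
    using kZ_meas by (simp add: measurable_cong_sets[OF sets_pp refl])
  have intk: "integrable (?p \<Otimes>\<^sub>M ?UZ) (\<lambda>y. kZ (fst y) (snd y))"
    by (rule bnd_integrable[where B=1]) (auto simp: kp kZ_abs PP.finite_measure_axioms)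
  define G where "G u = (\<integral>v. kZ u v \<partial>?UZ)" for u
  have "(\<integral>y. kZ (fst y) (snd y) \<partial>(?p \<Otimes>\<^sub>M ?UZ)) = (\<integral>u. G u \<partial>?p)"
    using PP.integral_fst'[OF intk] by (simp add: G_def)
  also have "\<dots> = (\<integral>x. (\<Sum>i\<in>{1..n}. q i x * G (\<phi> i x, i)) \<partial>M)"
  proof (rule int_pZ)
    have sets_xp: "sets (?X \<Otimes>\<^sub>M ?UZ) = sets (?X \<Otimes>\<^sub>M ?X)" by (intro sets_pair_measure_cong sets_UZ refl)
    have "(\<lambda>(u, v). kZ u v) \<in> borel_measurable (?X \<Otimes>\<^sub>M ?UZ)"
      using kZ_meas by (simp add: measurable_cong_sets[OF sets_xp refl] case_prod_beta')
    then show "G \<in> borel_measurable ?X"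
      unfolding G_def by (rule UZ.borel_measurable_lebesgue_integral)
    fix u show "\<bar>G u\<bar> \<le> 1"
      unfolding G_def by (rule abs_int_bound) (auto simp: prob_UZ sets_UZ kZ_abs measurable_cong_sets[OF sets_UZ refl])
  qed
  also have "\<dots> = (\<integral>x. (\<integral>w. h2 (x, w) \<partial>?U) / real n \<partial>M)"
  proof (intro Bochner_Integration.integral_cong refl)
    fix x assume x: "x \<in> space M"
    have "G (\<phi> i x, i) = (\<integral>w. k0 (\<phi> i x) w \<partial>?U) / real n" if i: "i \<in> {1..n}" for i
    proof -
      have "G (\<phi> i x, i) = (\<integral>w. (\<Sum>l\<in>{1..n}. kZ (\<phi> i x, i) (w, l)) / real n \<partial>?U)"
        unfolding G_def by (rule int_UZ[OF kZ_meas1 kZ_abs])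
      also have "\<dots> = (\<integral>w. k0 (\<phi> i x) w / real n \<partial>?U)"
      proof (intro Bochner_Integration.integral_cong refl)
        fix w
        have "(\<Sum>l\<in>{1..n}. kZ (\<phi> i x, i) (w, l)) = (\<Sum>l\<in>{1..n}. if i = l then k0 (\<phi> i x) w else 0)"
          by (intro sum.cong) (auto simp: kZ_def)
        also have "\<dots> = k0 (\<phi> i x) w" using i by simp
        finally show "(\<Sum>l\<in>{1..n}. kZ (\<phi> i x, i) (w, l)) / real n = k0 (\<phi> i x) w / real n" by simp
      qed
      also have "\<dots> = (\<integral>w. k0 (\<phi> i x) w \<partial>?U) / real n"
        by (rule integral_divide_zero)
      finally show ?thesis .
    qed
    then have "(\<Sum>i\<in>{1..n}. q i x * G (\<phi> i x, i)) = (\<Sum>i\<in>{1..n}. q i x * (\<integral>w. k0 (\<phi> i x) w \<partial>?U)) / real n"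
      by (simp add: sum_divide_distrib)
    also have "(\<Sum>i\<in>{1..n}. q i x * (\<integral>w. k0 (\<phi> i x) w \<partial>?U)) = (\<Sum>i\<in>{1..n}. (\<integral>w. q i x * k0 (\<phi> i x) w \<partial>?U))"
      by (intro sum.cong refl integral_mult_right_zero[symmetric])
    also have "\<dots> = (\<integral>w. (\<Sum>i\<in>{1..n}. q i x * k0 (\<phi> i x) w) \<partial>?U)"
      by (rule Bochner_Integration.integral_sum[where f="\<lambda>i w. q i x * k0 (\<phi> i x) w", symmetric])
         (auto intro!: integrable_mult_right k0_int_U)
    also have "\<dots> = (\<integral>w. h2 (x, w) \<partial>?U)"
      unfolding h2_def by simp
    finally show "(\<Sum>i\<in>{1..n}. q i x * G (\<phi> i x, i)) = (\<integral>w. h2 (x, w) \<partial>?U) / real n" .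
  qed
  also have "\<dots> = (\<integral>x. (\<integral>w. h2 (x, w) \<partial>?U) \<partial>M) / real n"
    by (rule integral_divide_zero)
  also have "\<dots> = (\<integral>z. h2 z \<partial>(M \<Otimes>\<^sub>M ?U)) / real n"
    by (simp add: MU.integral_fst'[OF h2_int])
  finally show ?thesis .
qed

lemma h3_int: "integrable ((unif_cube :: (real^'d) measure) \<Otimes>\<^sub>M (unif_cube :: (real^'d) measure)) (\<lambda>z. k0 (fst z) (snd z))"
proof (rule bnd_integrable[where B=1])
  interpret U: prob_space "unif_cube :: (real^'d) measure" by (rule prob_unif_cube)
  interpret UU: pair_prob_space "unif_cube :: (real^'d) measure" "unif_cube :: (real^'d) measure" ..
  show "finite_measure ((unif_cube :: (real^'d) measure) \<Otimes>\<^sub>M (unif_cube :: (real^'d) measure))"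
    by (rule UU.finite_measure_axioms)
qed (auto simp: k0_abs)

lemma T3: "(\<integral>y. kZ (fst y) (snd y) \<partial>((unif_Z n :: ((real^'d) \<times> nat) measure) \<Otimes>\<^sub>M (unif_Z n :: ((real^'d) \<times> nat) measure)))
   = (\<integral>z. k0 (fst z) (snd z) \<partial>((unif_cube :: (real^'d) measure) \<Otimes>\<^sub>M (unif_cube :: (real^'d) measure))) / real n"
proof -
  let ?UZ = "unif_Z n :: ((real^'d) \<times> nat) measure"
  let ?U = "unif_cube :: (real^'d) measure"
  let ?X = "(borel :: (real^'d) measure) \<Otimes>\<^sub>M count_space (UNIV :: nat set)"
  interpret UZ: prob_space ?UZ by (rule prob_UZ)
  interpret U: prob_space ?U by (rule prob_unif_cube)
  interpret PP: pair_prob_space ?UZ ?UZ ..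
  interpret UU: pair_prob_space ?U ?U ..
  have sets_pp: "sets (?UZ \<Otimes>\<^sub>M ?UZ) = sets (?X \<Otimes>\<^sub>M ?X)" by (intro sets_pair_measure_cong sets_UZ)
  have kp: "(\<lambda>y. kZ (fst y) (snd y)) \<in> borel_measurable (?UZ \<Otimes>\<^sub>M ?UZ)"
    using kZ_meas by (simp add: measurable_cong_sets[OF sets_pp refl])
  have intk: "integrable (?UZ \<Otimes>\<^sub>M ?UZ) (\<lambda>y. kZ (fst y) (snd y))"
    by (rule bnd_integrable[where B=1]) (auto simp: kp kZ_abs PP.finite_measure_axioms)
  define G where "G u = (\<integral>v. kZ u v \<partial>?UZ)" for u
  have "(\<integral>y. kZ (fst y) (snd y) \<partial>(?UZ \<Otimes>\<^sub>M ?UZ)) = (\<integral>u. G u \<partial>?UZ)"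
    using PP.integral_fst'[OF intk] by (simp add: G_def)
  also have "\<dots> = (\<integral>w. (\<Sum>i\<in>{1..n}. G (w, i)) / real n \<partial>?U)"
  proof (rule int_UZ)
    have sets_xp: "sets (?X \<Otimes>\<^sub>M ?UZ) = sets (?X \<Otimes>\<^sub>M ?X)" by (intro sets_pair_measure_cong sets_UZ refl)
    have "(\<lambda>(u, v). kZ u v) \<in> borel_measurable (?X \<Otimes>\<^sub>M ?UZ)"
      using kZ_meas by (simp add: measurable_cong_sets[OF sets_xp refl] case_prod_beta')
    then show "G \<in> borel_measurable ?X"
      unfolding G_def by (rule UZ.borel_measurable_lebesgue_integral)
    fix u show "\<bar>G u\<bar> \<le> 1"
      unfolding G_def by (rule abs_int_bound) (auto simp: prob_UZ sets_UZ kZ_abs measurable_cong_sets[OF sets_UZ refl])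
  qed
  also have "\<dots> = (\<integral>w. (\<integral>w'. k0 w w' \<partial>?U) / real n \<partial>?U)"
  proof (intro Bochner_Integration.integral_cong refl)
    fix w
    have "G (w, i) = (\<integral>w'. k0 w w' \<partial>?U) / real n" if i: "i \<in> {1..n}" for i
    proof -
      have "G (w, i) = (\<integral>w'. (\<Sum>l\<in>{1..n}. kZ (w, i) (w', l)) / real n \<partial>?U)"
        unfolding G_def by (rule int_UZ[OF kZ_meas1 kZ_abs])
      also have "\<dots> = (\<integral>w'. k0 w w' / real n \<partial>?U)"
      proof (intro Bochner_Integration.integral_cong refl)
        fix w'
        have "(\<Sum>l\<in>{1..n}. kZ (w, i) (w', l)) = (\<Sum>l\<in>{1..n}. if i = l then k0 w w' else 0)"
          by (intro sum.cong) (auto simp: kZ_def)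
        also have "\<dots> = k0 w w'" using i by simp
        finally show "(\<Sum>l\<in>{1..n}. kZ (w, i) (w', l)) / real n = k0 w w' / real n" by simp
      qed
      also have "\<dots> = (\<integral>w'. k0 w w' \<partial>?U) / real n"
        by (rule integral_divide_zero)
      finally show ?thesis .
    qed
    then have "(\<Sum>i\<in>{1..n}. G (w, i)) = (\<Sum>i\<in>{1..n}. (\<integral>w'. k0 w w' \<partial>?U) / real n)"
      by (intro sum.cong) auto
    also have "\<dots> = (\<integral>w'. k0 w w' \<partial>?U)" using n1 by simp
    finally show "(\<Sum>i\<in>{1..n}. G (w, i)) / real n = (\<integral>w'. k0 w w' \<partial>?U) / real n" by simp
  qed
  also have "\<dots> = (\<integral>w. (\<integral>w'. k0 w w' \<partial>?U) \<partial>?U) / real n"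
    by (rule integral_divide_zero)
  also have "\<dots> = (\<integral>z. k0 (fst z) (snd z) \<partial>(?U \<Otimes>\<^sub>M ?U)) / real n"
    using UU.integral_fst'[OF h3_int] by simp
  finally show ?thesis .
qed

end
lemma sum_offdiag_const:
  assumes "N \<ge> 1"
  shows "(\<Sum>j\<in>{1..N}. \<Sum>k\<in>{1..N}-{j}. (c::real)) = real N * (real N - 1) * c"
proof -
  have "(\<Sum>j\<in>{1..N}. \<Sum>k\<in>{1..N}-{j}. c) = (\<Sum>j\<in>{1..N}. (real N - 1) * c)"
    using assms by (intro sum.cong refl) (simp add: card_Diff_singleton of_nat_diff)
  then show ?thesis by simp
qed

theorem proposition1:
  fixes M :: "'a measure"
    and n N :: nat
    and q :: "nat \<Rightarrow> 'a \<Rightarrow> real"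
    and \<phi> :: "nat \<Rightarrow> 'a \<Rightarrow> real^'d"
  assumes "prob_space M"
    and "n \<ge> 1"
    and "N \<ge> 2"
    and "\<And>i. i \<in> {1..n} \<Longrightarrow> \<phi> i \<in> borel_measurable M"
    and "\<And>i. i \<in> {1..n} \<Longrightarrow> q i \<in> borel_measurable M"
    and "\<And>i x. i \<in> {1..n} \<Longrightarrow> x \<in> space M \<Longrightarrow> \<phi> i x \<in> unit_cube"
    and "\<And>i x. i \<in> {1..n} \<Longrightarrow> x \<in> space M \<Longrightarrow> 0 \<le> q i x \<and> q i x \<le> 1"
    and "\<And>x. x \<in> space M \<Longrightarrow> (\<Sum>i\<in>{1..n}. q i x) = 1"
  shows "(\<integral>s. ell_Z n N q \<phi> (fst s) (snd s)
            \<partial>((\<Pi>\<^sub>M j\<in>{1..N}. M) \<Otimes>\<^sub>M (\<Pi>\<^sub>M j\<in>{1..N}. unif_cube)))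
         = MMD2 kZ (p_Z M n q \<phi>) (unif_Z n)"
proof -
  interpret S: setting M n q \<phi>
    using assms(1,2,4,5,7,8) by (rule setting.intro)
  let ?P1 = "\<Pi>\<^sub>M j\<in>{1..N}. M"
  let ?P2 = "\<Pi>\<^sub>M j\<in>{1..N}. (unif_cube :: (real^'d) measure)"
  let ?\<Omega> = "?P1 \<Otimes>\<^sub>M ?P2"
  let ?U = "unif_cube :: (real^'d) measure"
  have pM: "prob_space M" by fact
  have pU: "prob_space ?U" by (rule prob_unif_cube)
  have pP1: "prob_space ?P1" by (rule prob_space_PiM) (rule pM)
  have pP2: "prob_space ?P2" by (rule prob_space_PiM) (rule pU)
  have N1: "N \<ge> 1" using assms by simp
  define c1 where "c1 = (\<integral>z. S.h1 z \<partial>(M \<Otimes>\<^sub>M M))"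
  define c2 where "c2 = (\<integral>z. S.h2 z \<partial>(M \<Otimes>\<^sub>M ?U))"
  define c3 where "c3 = (\<integral>z. k0 (fst z) (snd z) \<partial>(?U \<Otimes>\<^sub>M ?U))"
  define A1 where "A1 s = (\<Sum>j\<in>{1..N}. \<Sum>k\<in>{1..N}-{j}. S.h1 (fst s j, fst s k))" for s :: "(nat \<Rightarrow> 'a) \<times> (nat \<Rightarrow> real^'d)"
  define A2 where "A2 s = (\<Sum>j\<in>{1..N}. \<Sum>k\<in>{1..N}. S.h2 (fst s j, snd s k))" for s :: "(nat \<Rightarrow> 'a) \<times> (nat \<Rightarrow> real^'d)"
  define A3 where "A3 s = (\<Sum>j\<in>{1..N}. \<Sum>k\<in>{1..N}-{j}. k0 (snd s j) (snd s k))" for s :: "(nat \<Rightarrow> 'a) \<times> (nat \<Rightarrow> real^'d)"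
  have ell: "ell_Z n N q \<phi> (fst s) (snd s) =
      1 / (real N * (real N - 1)) * A1 s - 2 / (real n * real N ^ 2) * A2 s + 1 / (real n * real N * (real N - 1)) * A3 s" for s
    unfolding ell_Z_def A1_def A2_def A3_def S.h1_def S.h2_def by simp
  have i1: "integrable ?\<Omega> (\<lambda>s. S.h1 (fst s j, fst s k))" "(\<integral>s. S.h1 (fst s j, fst s k) \<partial>?\<Omega>) = c1"
    if "j \<in> {1..N}" "k \<in> {1..N}-{j}" for j k
    using E_fst[OF pM pP2 _ _ _ _ S.h1_int, of "{1..N}" j k] that by (auto simp: c1_def)
  have i2: "integrable ?\<Omega> (\<lambda>s. S.h2 (fst s j, snd s k))" "(\<integral>s. S.h2 (fst s j, snd s k) \<partial>?\<Omega>) = c2"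
    if "j \<in> {1..N}" "k \<in> {1..N}" for j k
    using E_mix[OF pM pU _ _ S.h2_int, of j "{1..N}" k] that by (auto simp: c2_def)
  have i3: "integrable ?\<Omega> (\<lambda>s. k0 (snd s j) (snd s k))" "(\<integral>s. k0 (snd s j) (snd s k) \<partial>?\<Omega>) = c3"
    if "j \<in> {1..N}" "k \<in> {1..N}-{j}" for j k
    using E_snd[OF pU pP1 _ _ _ _ S.h3_int, of "{1..N}" j k] that by (auto simp: c3_def)
  have iA1: "integrable ?\<Omega> A1" unfolding A1_def
    by (intro Bochner_Integration.integrable_sum i1) auto
  have iA2: "integrable ?\<Omega> A2" unfolding A2_def
    by (intro Bochner_Integration.integrable_sum i2) auto
  have iA3: "integrable ?\<Omega> A3" unfolding A3_def
    by (intro Bochner_Integration.integrable_sum i3) auto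
  have vA1: "(\<integral>s. A1 s \<partial>?\<Omega>) = real N * (real N - 1) * c1"
  proof -
    have "(\<integral>s. A1 s \<partial>?\<Omega>) = (\<Sum>j\<in>{1..N}. \<Sum>k\<in>{1..N}-{j}. (\<integral>s. S.h1 (fst s j, fst s k) \<partial>?\<Omega>))"
    proof -
      have "(\<integral>s. (\<Sum>j\<in>{1..N}. \<Sum>k\<in>{1..N}-{j}. S.h1 (fst s j, fst s k)) \<partial>?\<Omega>) = (\<Sum>j\<in>{1..N}. \<integral>s. (\<Sum>k\<in>{1..N}-{j}. S.h1 (fst s j, fst s k)) \<partial>?\<Omega>)"
        by (rule Bochner_Integration.integral_sum[where f="\<lambda>j s. \<Sum>k\<in>{1..N}-{j}. S.h1 (fst s j, fst s k)"])
           (intro Bochner_Integration.integrable_sum i1; auto)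
      also have "\<dots> = (\<Sum>j\<in>{1..N}. \<Sum>k\<in>{1..N}-{j}. \<integral>s. S.h1 (fst s j, fst s k) \<partial>?\<Omega>)"
      proof (rule sum.cong[OF refl])
        fix j assume j: "j \<in> {1..N}"
        show "(\<integral>s. (\<Sum>k\<in>{1..N}-{j}. S.h1 (fst s j, fst s k)) \<partial>?\<Omega>) = (\<Sum>k\<in>{1..N}-{j}. \<integral>s. S.h1 (fst s j, fst s k) \<partial>?\<Omega>)"
          by (rule Bochner_Integration.integral_sum) (use j i1 in auto)
      qed
      finally show ?thesis unfolding A1_def[abs_def] .
    qed
    also have "\<dots> = (\<Sum>j\<in>{1..N}. \<Sum>k\<in>{1..N}-{j}. c1)"
      by (intro sum.cong refl i1(2)) auto
    finally show ?thesis using sum_offdiag_const[OF N1] by simp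
  qed
  have vA2: "(\<integral>s. A2 s \<partial>?\<Omega>) = real N * real N * c2"
  proof -
    have "(\<integral>s. A2 s \<partial>?\<Omega>) = (\<Sum>j\<in>{1..N}. \<Sum>k\<in>{1..N}. (\<integral>s. S.h2 (fst s j, snd s k) \<partial>?\<Omega>))"
    proof -
      have "(\<integral>s. (\<Sum>j\<in>{1..N}. \<Sum>k\<in>{1..N}. S.h2 (fst s j, snd s k)) \<partial>?\<Omega>) = (\<Sum>j\<in>{1..N}. \<integral>s. (\<Sum>k\<in>{1..N}. S.h2 (fst s j, snd s k)) \<partial>?\<Omega>)"
        by (rule Bochner_Integration.integral_sum[where f="\<lambda>j s. \<Sum>k\<in>{1..N}. S.h2 (fst s j, snd s k)"])
           (intro Bochner_Integration.integrable_sum i2; auto)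
      also have "\<dots> = (\<Sum>j\<in>{1..N}. \<Sum>k\<in>{1..N}. \<integral>s. S.h2 (fst s j, snd s k) \<partial>?\<Omega>)"
      proof (rule sum.cong[OF refl])
        fix j assume j: "j \<in> {1..N}"
        show "(\<integral>s. (\<Sum>k\<in>{1..N}. S.h2 (fst s j, snd s k)) \<partial>?\<Omega>) = (\<Sum>k\<in>{1..N}. \<integral>s. S.h2 (fst s j, snd s k) \<partial>?\<Omega>)"
          by (rule Bochner_Integration.integral_sum) (use j i2 in auto)
      qed
      finally show ?thesis unfolding A2_def[abs_def] .
    qed
    also have "\<dots> = (\<Sum>j\<in>{1..N}. \<Sum>k\<in>{1..N}. c2)"
      by (intro sum.cong refl i2(2)) auto
    finally show ?thesis by simp
  qed
  have vA3: "(\<integral>s. A3 s \<partial>?\<Omega>) = real N * (real N - 1) * c3"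
  proof -
    have "(\<integral>s. A3 s \<partial>?\<Omega>) = (\<Sum>j\<in>{1..N}. \<Sum>k\<in>{1..N}-{j}. (\<integral>s. k0 (snd s j) (snd s k) \<partial>?\<Omega>))"
    proof -
      have "(\<integral>s. (\<Sum>j\<in>{1..N}. \<Sum>k\<in>{1..N}-{j}. k0 (snd s j) (snd s k)) \<partial>?\<Omega>) = (\<Sum>j\<in>{1..N}. \<integral>s. (\<Sum>k\<in>{1..N}-{j}. k0 (snd s j) (snd s k)) \<partial>?\<Omega>)"
        by (rule Bochner_Integration.integral_sum[where f="\<lambda>j s. \<Sum>k\<in>{1..N}-{j}. k0 (snd s j) (snd s k)"])
           (intro Bochner_Integration.integrable_sum i3; auto)
      also have "\<dots> = (\<Sum>j\<in>{1..N}. \<Sum>k\<in>{1..N}-{j}. \<integral>s. k0 (snd s j) (snd s k) \<partial>?\<Omega>)"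
      proof (rule sum.cong[OF refl])
        fix j assume j: "j \<in> {1..N}"
        show "(\<integral>s. (\<Sum>k\<in>{1..N}-{j}. k0 (snd s j) (snd s k)) \<partial>?\<Omega>) = (\<Sum>k\<in>{1..N}-{j}. \<integral>s. k0 (snd s j) (snd s k) \<partial>?\<Omega>)"
          by (rule Bochner_Integration.integral_sum) (use j i3 in auto)
      qed
      finally show ?thesis unfolding A3_def[abs_def] .
    qed
    also have "\<dots> = (\<Sum>j\<in>{1..N}. \<Sum>k\<in>{1..N}-{j}. c3)"
      by (intro sum.cong refl i3(2)) auto
    finally show ?thesis using sum_offdiag_const[OF N1] by simp
  qed
  have "(\<integral>s. ell_Z n N q \<phi> (fst s) (snd s) \<partial>?\<Omega>)
      = 1 / (real N * (real N - 1)) * (\<integral>s. A1 s \<partial>?\<Omega>) - 2 / (real n * real N ^ 2) * (\<integral>s. A2 s \<partial>?\<Omega>)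
        + 1 / (real n * real N * (real N - 1)) * (\<integral>s. A3 s \<partial>?\<Omega>)"
    unfolding ell using iA1 iA2 iA3 by simp
  also have "\<dots> = c1 - 2 * (c2 / real n) + c3 / real n"
  proof -
    have p1: "real N > 0" "real N - 1 > 0" "real n > 0" using assms(2,3) by auto
    have f1: "1 / (real N * (real N - 1)) * (real N * (real N - 1) * c1) = c1"
      using p1 by (simp add: field_simps)
    have f2: "2 / (real n * real N ^ 2) * (real N * real N * c2) = 2 * (c2 / real n)"
      using p1 by (simp add: field_simps power2_eq_square)
    have f3: "1 / (real n * real N * (real N - 1)) * (real N * (real N - 1) * c3) = c3 / real n"
      using p1 by (simp add: field_simps)
    show ?thesis unfolding vA1 vA2 vA3 f1 f2 f3 ..
  qed
  also have "\<dots> = MMD2 kZ (p_Z M n q \<phi>) (unif_Z n)"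
    unfolding MMD2_def S.T1 S.T2 S.T3 c1_def c2_def c3_def ..
  finally show ?thesis .
qed

end
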